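(* Let $(W_i,\partial_i)_i$, $(\widehat W_i,\widehat\partial_i)_i$ and $(V_i,d_i)_i$ be complexes of real vector spaces, and for each $i$ let $E_{W_i}:\widehat W_i\to W_i$, $\widehat R_{W_i}:W_i\to\widehat W_i$, $\mathcal{E}_i:W_i\to V_i$, $\mathcal{R}_i:V_i\to W_i$ be linear maps satisfying: (A1) $\widehat R_{W_i}E_{W_i}$ restricted to $\ker\widehat\partial_i$ is the identity of $\ker\widehat\partial_i$; (A2) $(E_{W_{i+1}}\widehat R_{W_{i+1}}-\mathrm{Id}_{W_{i+1}})(\ker\partial_{i+1})\subset\operatorname{Im}\partial_i$; (A3) $\widehat R_{W_{i+1}}\partial_i=\widehat\partial_i\widehat R_{W_i}$ and $E_{W_{i+1}}\widehat\partial_i=\partial_iE_{W_i}$; (B1) $\mathcal{R}_i\mathcal{E}_i=\mathrm{Id}_{W_i}$; (B2) $(\mathcal{E}_{i+1}\mathcal{R}_{i+1}-\mathrm{Id}_{V_{i+1}})(\ker d_{i+1})\subset\operatorname{Im}d_i$; (B3) $\mathcal{R}_{i+1}d_i=\partial_i\mathcal{R}_i$ and $\mathcal{E}_{i+1}\partial_i=d_i\mathcal{E}_i$. Let $\widehat V_i$, $\widehat d_i$, $E_{V_i}$, $\widehat R_{V_i}$ be as defined in the context. Then, for all $i$: (i) $\widehat R_{V_i}E_{V_i}$ restricted to $\ker\widehat d_i$ is the identity of $\ker\widehat d_i$; (ii) $(E_{V_{i+1}}\widehat R_{V_{i+1}}-\mathrm{Id}_{V_{i+1}})(\ker d_{i+1})\subset\operatorname{Im}d_i$;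 (iii) $\widehat R_{V_{i+1}}d_i=\widehat d_i\widehat R_{V_i}$ and $E_{V_{i+1}}\widehat d_i=d_iE_{V_i}$.
   Context: A complex $(W_i,\partial_i)_i$ is a sequence of vector spaces indexed by integers with linear maps $\partial_i:W_i\to W_{i+1}$, $\partial_{i+1}\partial_i=0$. Set $C_i\coloneq\ker\mathcal{R}_i\subset V_i$. Under (B1), every $v\in V_i$ can be written uniquely as $v=\mathcal{E}_iv_w+v_c$ with $v_w\in W_i$, $v_c\in C_i$; define $\Pi_{C_i}v\coloneq v_c$. Define $\widehat V_i\coloneq\widehat W_i\times C_i$, with elements $\widehat v=(\widehat v_w,\widehat v_c)$, and $\widehat d_i:\widehat V_i\to\widehat V_{i+1}$ by $\widehat d_i(\widehat v_w,\widehat v_c)\coloneq(\widehat\partial_i\widehat v_w,d_i\widehat v_c)$ (well defined since $d_iC_i\subset C_{i+1}$ under (B3)). Define $E_{V_i}:\widehat V_i\to V_i$ by $E_{V_i}(\widehat v_w,\widehat v_c)\coloneq\mathcal{E}_iE_{W_i}\widehat v_w+\widehat v_c$ and $\widehat R_{V_i}:V_i\to\widehat V_i$ by $\widehat R_{V_i}v\coloneq(\widehat R_{W_i}\mathcal{R}_iv,\Pi_{C_i}v)$. *)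

theory Defs
  imports "HOL-Analysis.Analysis"
begin

text \<open>A complex indexed by the integers is modelled by a family of real
subspaces X i of an ambient real vector space, together with maps
\<delta> i that are linear from X i to X (i+1), with \<delta> (i+1) \<circ> \<delta> i = 0 on X i.\<close>

definition lin_on :: "'a::real_vector set \<Rightarrow> 'b::real_vector set \<Rightarrow> ('a \<Rightarrow> 'b) \<Rightarrow> bool" where
  "lin_on A B f \<longleftrightarrow> f ` A \<subseteq> B \<and>
     (\<forall>x\<in>A. \<forall>y\<in>A. f (x + y) = f x + f y) \<and>
     (\<forall>c. \<forall>x\<in>A. f (c *\<^sub>R x) = c *\<^sub>R f x)"

definition is_complex :: "(int \<Rightarrow> 'a::real_vector set) \<Rightarrow> (int \<Rightarrow> 'a \<Rightarrow> 'a) \<Rightarrow> bool" where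
  "is_complex X \<delta> \<longleftrightarrow> (\<forall>i. subspace (X i) \<and> lin_on (X i) (X (i + 1)) (\<delta> i)) \<and>
     (\<forall>i. \<forall>x\<in>X i. \<delta> (i + 1) (\<delta> i x) = 0)"

definition Csp :: "(int \<Rightarrow> 'v::real_vector set) \<Rightarrow> (int \<Rightarrow> 'v \<Rightarrow> 'w::real_vector) \<Rightarrow> int \<Rightarrow> 'v set" where
  "Csp V Rc i = {v \<in> V i. Rc i v = 0}"

definition PiC :: "(int \<Rightarrow> 'w::real_vector set) \<Rightarrow> (int \<Rightarrow> 'v::real_vector set) \<Rightarrow>
    (int \<Rightarrow> 'w \<Rightarrow> 'v) \<Rightarrow> (int \<Rightarrow> 'v \<Rightarrow> 'w) \<Rightarrow> int \<Rightarrow> 'v \<Rightarrow> 'v" where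
  "PiC W V Ec Rc i v = (THE vc. vc \<in> Csp V Rc i \<and> (\<exists>vw\<in>W i. v = Ec i vw + vc))"

definition Vhat :: "(int \<Rightarrow> 'hw set) \<Rightarrow> (int \<Rightarrow> 'v::real_vector set) \<Rightarrow> (int \<Rightarrow> 'v \<Rightarrow> 'w::real_vector)
    \<Rightarrow> int \<Rightarrow> ('hw \<times> 'v) set" where
  "Vhat Wh V Rc i = Wh i \<times> Csp V Rc i"

definition dhat :: "(int \<Rightarrow> 'hw \<Rightarrow> 'hw) \<Rightarrow> (int \<Rightarrow> 'v \<Rightarrow> 'v) \<Rightarrow> int \<Rightarrow> 'hw \<times> 'v \<Rightarrow> 'hw \<times> 'v" where
  "dhat dh d i = (\<lambda>(a, c). (dh i a, d i c))"

definition EV :: "(int \<Rightarrow> 'w \<Rightarrow> 'v::real_vector) \<Rightarrow> (int \<Rightarrow> 'hw \<Rightarrow> 'w) \<Rightarrow> int \<Rightarrow> 'hw \<times> 'v \<Rightarrow> 'v" where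
  "EV Ec EW i = (\<lambda>(a, c). Ec i (EW i a) + c)"

definition RV :: "(int \<Rightarrow> 'w::real_vector set) \<Rightarrow> (int \<Rightarrow> 'v::real_vector set) \<Rightarrow>
    (int \<Rightarrow> 'w \<Rightarrow> 'hw) \<Rightarrow> (int \<Rightarrow> 'w \<Rightarrow> 'v) \<Rightarrow> (int \<Rightarrow> 'v \<Rightarrow> 'w) \<Rightarrow> int \<Rightarrow> 'v \<Rightarrow> 'hw \<times> 'v" where
  "RV W V RW Ec Rc i v = (RW i (Rc i v), PiC W V Ec Rc i v)"

end

theory Submission
  imports Defs
begin

lemma lin_on_diff:
  assumes "lin_on A B f" "subspace A" "x \<in> A" "y \<in> A"
  shows "f (x - y) = f x - f y"
proof -
  have m: "(-1) *\<^sub>R y \<in> A" using subspace_neg[OF assms(2) assms(4)] by simp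
  have s: "f ((-1) *\<^sub>R y) = (-1) *\<^sub>R f y" using assms(1,4) unfolding lin_on_def by blast
  have "f (x - y) = f (x + (-1) *\<^sub>R y)" by simp
  also have "\<dots> = f x + f ((-1) *\<^sub>R y)" using assms m unfolding lin_on_def by blast
  also have "\<dots> = f x - f y" using s by simp
  finally show ?thesis .
qed

lemma lin_on_add:
  assumes "lin_on A B f" "x \<in> A" "y \<in> A"
  shows "f (x + y) = f x + f y"
  using assms unfolding lin_on_def by blast

lemma lin_on_mem:
  assumes "lin_on A B f" "x \<in> A"
  shows "f x \<in> B"
  using assms unfolding lin_on_def by blast

lemma lin_on_zero:
  assumes "lin_on A B f" "subspace A"
  shows "f 0 = 0"
  using lin_on_diff[OF assms, of 0 0] assms by (simp add: subspace_0)

lemma PiC_eq: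
  assumes linEc: "lin_on (W i) (V i) (Ec i)" and linRc: "lin_on (V i) (W i) (Rc i)"
    and sV: "subspace (V i)"
    and B1: "\<forall>x\<in>W i. Rc i (Ec i x) = x"
    and v: "v \<in> V i"
  shows "PiC W V Ec Rc i v = v - Ec i (Rc i v)"
  unfolding PiC_def
proof (rule the_equality)
  have rv: "Rc i v \<in> W i" using lin_on_mem[OF linRc v] .
  have ev: "Ec i (Rc i v) \<in> V i" using lin_on_mem[OF linEc rv] .
  show "v - Ec i (Rc i v) \<in> Csp V Rc i \<and> (\<exists>vw\<in>W i. v = Ec i vw + (v - Ec i (Rc i v)))"
    unfolding Csp_def using lin_on_diff[OF linRc sV v ev] B1 rv ev v sV
    by (auto simp: subspace_diff)
next
  fix vc assume h: "vc \<in> Csp V Rc i \<and> (\<exists>vw\<in>W i. v = Ec i vw + vc)"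
  then obtain vw where vw: "vw \<in> W i" "v = Ec i vw + vc" and c: "vc \<in> V i" "Rc i vc = 0"
    unfolding Csp_def by auto
  have ew: "Ec i vw \<in> V i" using lin_on_mem[OF linEc vw(1)] .
  have "Rc i v = vw" using vw lin_on_add[OF linRc ew c(1)] c B1 by simp
  then show "vc = v - Ec i (Rc i v)" using vw by simp
qed

theorem theorem7:
  fixes W :: "int \<Rightarrow> 'w::real_vector set" and pd :: "int \<Rightarrow> 'w \<Rightarrow> 'w"
    and Wh :: "int \<Rightarrow> 'hw::real_vector set" and pdh :: "int \<Rightarrow> 'hw \<Rightarrow> 'hw"
    and V :: "int \<Rightarrow> 'v::real_vector set" and d :: "int \<Rightarrow> 'v \<Rightarrow> 'v"
    and EW :: "int \<Rightarrow> 'hw \<Rightarrow> 'w" and RW :: "int \<Rightarrow> 'w \<Rightarrow> 'hw"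
    and Ec :: "int \<Rightarrow> 'w \<Rightarrow> 'v" and Rc :: "int \<Rightarrow> 'v \<Rightarrow> 'w"
  assumes cW: "is_complex W pd" and cWh: "is_complex Wh pdh" and cV: "is_complex V d"
    and linEW: "\<forall>i. lin_on (Wh i) (W i) (EW i)"
    and linRW: "\<forall>i. lin_on (W i) (Wh i) (RW i)"
    and linEc: "\<forall>i. lin_on (W i) (V i) (Ec i)"
    and linRc: "\<forall>i. lin_on (V i) (W i) (Rc i)"
    and A1: "\<forall>i. \<forall>x\<in>Wh i. pdh i x = 0 \<longrightarrow> RW i (EW i x) = x"
    and A2: "\<forall>i. \<forall>x\<in>W (i + 1). pd (i + 1) x = 0 \<longrightarrow> EW (i + 1) (RW (i + 1) x) - x \<in> pd i ` W i"
    and A3a: "\<forall>i. \<forall>x\<in>W i. RW (i + 1) (pd i x) = pdh i (RW i x)"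
    and A3b: "\<forall>i. \<forall>x\<in>Wh i. EW (i + 1) (pdh i x) = pd i (EW i x)"
    and B1: "\<forall>i. \<forall>x\<in>W i. Rc i (Ec i x) = x"
    and B2: "\<forall>i. \<forall>v\<in>V (i + 1). d (i + 1) v = 0 \<longrightarrow> Ec (i + 1) (Rc (i + 1) v) - v \<in> d i ` V i"
    and B3a: "\<forall>i. \<forall>v\<in>V i. Rc (i + 1) (d i v) = pd i (Rc i v)"
    and B3b: "\<forall>i. \<forall>x\<in>W i. Ec (i + 1) (pd i x) = d i (Ec i x)"
  shows "\<forall>i.
     (\<forall>p\<in>Vhat Wh V Rc i. dhat pdh d i p = 0 \<longrightarrow> RV W V RW Ec Rc i (EV Ec EW i p) = p)
   \<and> (\<forall>v\<in>V (i + 1). d (i + 1) v = 0 \<longrightarrow>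
        EV Ec EW (i + 1) (RV W V RW Ec Rc (i + 1) v) - v \<in> d i ` V i)
   \<and> (\<forall>v\<in>V i. RV W V RW Ec Rc (i + 1) (d i v) = dhat pdh d i (RV W V RW Ec Rc i v))
   \<and> (\<forall>p\<in>Vhat Wh V Rc i. EV Ec EW (i + 1) (dhat pdh d i p) = d i (EV Ec EW i p))"
proof (intro allI conjI ballI impI)
  fix i :: int
  have sW: "\<And>j. subspace (W j)" and sWh: "\<And>j. subspace (Wh j)" and sV: "\<And>j. subspace (V j)"
    and lpd: "\<And>j. lin_on (W j) (W (j+1)) (pd j)" and lpdh: "\<And>j. lin_on (Wh j) (Wh (j+1)) (pdh j)"
    and ld: "\<And>j. lin_on (V j) (V (j+1)) (d j)"
    using cW cWh cV unfolding is_complex_def by auto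
  have Pi: "\<And>j v. v \<in> V j \<Longrightarrow> PiC W V Ec Rc j v = v - Ec j (Rc j v)"
    using PiC_eq linEc linRc sV B1 by blast
  {
    fix p assume p: "p \<in> Vhat Wh V Rc i" and dz: "dhat pdh d i p = 0"
    obtain a c where pac: "p = (a, c)" by (cases p)
    have a: "a \<in> Wh i" and c: "c \<in> V i" "Rc i c = 0" using p pac unfolding Vhat_def Csp_def by auto
    have pa: "pdh i a = 0" using dz pac unfolding dhat_def by (simp add: zero_prod_def)
    have ea: "EW i a \<in> W i" using lin_on_mem linEW a by blast
    have eea: "Ec i (EW i a) \<in> V i" using lin_on_mem linEc ea by blast
    have r: "Rc i (Ec i (EW i a) + c) = EW i a"
      using lin_on_add[OF linRc[rule_format] eea c(1)] c B1 ea by simp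
    have sv: "Ec i (EW i a) + c \<in> V i" using eea c sV by (simp add: subspace_add)
    show "RV W V RW Ec Rc i (EV Ec EW i p) = p"
      unfolding RV_def EV_def pac using Pi[OF sv] r A1 a pa by simp
  }
  {
    fix v assume v: "v \<in> V (i+1)" and dv: "d (i+1) v = 0"
    have rv: "Rc (i+1) v \<in> W (i+1)" using lin_on_mem linRc v by blast
    have "pd (i+1) (Rc (i+1) v) = 0"
      using B3a[rule_format, OF v] dv lin_on_zero[OF linRc[rule_format] sV] by (simp add: algebra_simps)
    then obtain w where w: "w \<in> W i" "EW (i+1) (RW (i+1) (Rc (i+1) v)) - Rc (i+1) v = pd i w"
      using A2 rv by blast
    have x1: "RW (i+1) (Rc (i+1) v) \<in> Wh (i+1)" using lin_on_mem linRW rv by blast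
    have x2: "EW (i+1) (RW (i+1) (Rc (i+1) v)) \<in> W (i+1)" using lin_on_mem linEW x1 by blast
    have "EV Ec EW (i + 1) (RV W V RW Ec Rc (i + 1) v) - v
        = Ec (i+1) (EW (i+1) (RW (i+1) (Rc (i+1) v))) - Ec (i+1) (Rc (i+1) v)"
      unfolding EV_def RV_def using Pi[OF v] by simp
    also have "\<dots> = Ec (i+1) (pd i w)"
      using lin_on_diff[OF linEc[rule_format] sW x2 rv] w by simp
    also have "\<dots> = d i (Ec i w)" using B3b w by blast
    finally show "EV Ec EW (i + 1) (RV W V RW Ec Rc (i + 1) v) - v \<in> d i ` V i"
      using lin_on_mem linEc w(1) by blast
  }
  {
    fix v assume v: "v \<in> V i"
    have rv: "Rc i v \<in> W i" using lin_on_mem linRc v by blast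
    have erv: "Ec i (Rc i v) \<in> V i" using lin_on_mem linEc rv by blast
    have dv: "d i v \<in> V (i+1)" using lin_on_mem[OF ld v] .
    show "RV W V RW Ec Rc (i + 1) (d i v) = dhat pdh d i (RV W V RW Ec Rc i v)"
      unfolding RV_def dhat_def
      using Pi[OF v] Pi[OF dv] B3a v A3a rv B3b lin_on_diff[OF ld sV v erv] by simp
  }
  {
    fix p assume p: "p \<in> Vhat Wh V Rc i"
    obtain a c where pac: "p = (a, c)" by (cases p)
    have a: "a \<in> Wh i" and c: "c \<in> V i" using p pac unfolding Vhat_def Csp_def by auto
    have ea: "EW i a \<in> W i" using lin_on_mem linEW a by blast
    have eea: "Ec i (EW i a) \<in> V i" using lin_on_mem linEc ea by blast
    show "EV Ec EW (i + 1) (dhat pdh d i p) = d i (EV Ec EW i p)"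
      unfolding EV_def dhat_def pac using A3b a B3b ea lin_on_add[OF ld eea c] by simp
  }
qed

end
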